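(* Let $A_1,\dots,A_m\in\mathbb{S}^n$ be linearly independent and $b\in\mathbb{R}^m$. Then Assumption 1(a) holds for all $p$ such that $\mathcal{M}_p$ is non-empty if and only if every $X\in\mathcal{C}$ is primal non-degenerate.
   Context: $\mathbb{S}^n$: real symmetric $n\times n$ matrices; $\langle U,V\rangle=\operatorname{tr}(U^\top V)$; $\mathcal{A}:\mathbb{S}^n\to\mathbb{R}^m$, $\mathcal{A}(X)_i=\langle A_i,X\rangle$. $\mathcal{C}=\{X\in\mathbb{S}^n:\mathcal{A}(X)=b,\ X\succeq0\}$; $\mathcal{M}_p=\{Y\in\mathbb{R}^{n\times p}:\mathcal{A}(YY^\top)=b\}$. Assumption 1(a) for $p$: $A_1Y,\dots,A_mY$ are linearly independent in $\mathbb{R}^{n\times p}$ for all $Y\in\mathcal{M}_p$. A matrix $X$ is primal non-degenerate if $X\in\mathcal{C}$ and $T_X+\ker\mathcal{A}=\mathbb{S}^n$, where $T_X$ is the tangent space at $X$ to the manifold of symmetric $n\times n$ matrices of rank $r=\operatorname{rank}(X)$, embedded in $\mathbb{S}^n$. *)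

theory Defs
  imports "HOL-Analysis.Analysis"
begin

definition sym_mat :: "real^'n^'n \<Rightarrow> bool" where
  "sym_mat X \<longleftrightarrow> transpose X = X"

definition frob :: "real^'n^'n \<Rightarrow> real^'n^'n \<Rightarrow> real" where
  "frob U V = trace (transpose U ** V)"

definition psd :: "real^'n^'n \<Rightarrow> bool" where
  "psd X \<longleftrightarrow> sym_mat X \<and> (\<forall>v. 0 \<le> v \<bullet> (X *v v))"

definition feasible_set :: "(nat \<Rightarrow> real^'n^'n) \<Rightarrow> nat \<Rightarrow> (nat \<Rightarrow> real) \<Rightarrow> (real^'n^'n) set" where
  "feasible_set A m b = {X. (\<forall>i<m. frob (A i) X = b i) \<and> psd X}"

text \<open>Y in R^{n x p} represented by its p columns Y 0, ..., Y (p-1); Y Y^T.\<close>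
definition YYt :: "nat \<Rightarrow> (nat \<Rightarrow> real^'n) \<Rightarrow> real^'n^'n" where
  "YYt p Y = (\<Sum>j<p. (\<chi> a c. Y j $ a * Y j $ c))"

definition Mp :: "(nat \<Rightarrow> real^'n^'n) \<Rightarrow> nat \<Rightarrow> (nat \<Rightarrow> real) \<Rightarrow> nat \<Rightarrow> (nat \<Rightarrow> real^'n) set" where
  "Mp A m b p = {Y. (\<forall>j\<ge>p. Y j = 0) \<and> (\<forall>i<m. frob (A i) (YYt p Y) = b i)}"

definition lin_indep_mats :: "(nat \<Rightarrow> real^'n^'n) \<Rightarrow> nat \<Rightarrow> bool" where
  "lin_indep_mats A m \<longleftrightarrow>
     (\<forall>c. (\<Sum>i<m. c i *\<^sub>R A i) = 0 \<longrightarrow> (\<forall>i<m. c i = 0))"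

text \<open>Assumption 1(a) for p: A_1 Y, ..., A_m Y linearly independent in R^{n x p}
  for all Y in M_p (the j-th column of A_i Y is A_i *v Y j).\<close>
definition assumption1a :: "(nat \<Rightarrow> real^'n^'n) \<Rightarrow> nat \<Rightarrow> (nat \<Rightarrow> real) \<Rightarrow> nat \<Rightarrow> bool" where
  "assumption1a A m b p \<longleftrightarrow>
     (\<forall>Y \<in> Mp A m b p. \<forall>c.
        (\<forall>j<p. (\<Sum>i<m. c i *\<^sub>R (A i *v Y j)) = 0) \<longrightarrow> (\<forall>i<m. c i = 0))"

definition sym_rank :: "nat \<Rightarrow> (real^'n^'n) set" where
  "sym_rank r = {X. sym_mat X \<and> rank X = r}"

definition tangent_space :: "real^'n^'n \<Rightarrow> (real^'n^'n) set" where
  "tangent_space X = {V. \<exists>\<gamma> e. e > 0 \<and> \<gamma> 0 = X \<and>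
       (\<forall>t. \<bar>t\<bar> < e \<longrightarrow> \<gamma> t \<in> sym_rank (rank X)) \<and>
       (\<gamma> has_vector_derivative V) (at 0)}"

definition primal_nondegenerate :: "(nat \<Rightarrow> real^'n^'n) \<Rightarrow> nat \<Rightarrow> (nat \<Rightarrow> real) \<Rightarrow> real^'n^'n \<Rightarrow> bool" where
  "primal_nondegenerate A m b X \<longleftrightarrow> X \<in> feasible_set A m b \<and>
     (\<forall>Z. sym_mat Z \<longrightarrow> (\<exists>T K. T \<in> tangent_space X \<and> sym_mat K \<and>
          (\<forall>i<m. frob (A i) K = 0) \<and> Z = T + K))"

end

theory Submission
  imports Defs
begin

definition outer :: "real^'n \<Rightarrow> real^'n \<Rightarrow> real^'n^'n" where
  "outer u v = (\<chi> a c. u$a * v$c)"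

lemma YYt_outer: "YYt p Y = (\<Sum>j<p. outer (Y j) (Y j))"
  by (simp add: YYt_def outer_def)

lemma outer_mv: "outer u v *v x = (v \<bullet> x) *\<^sub>R u"
  by (simp add: outer_def vec_eq_iff matrix_vector_mult_def inner_vec_def sum_distrib_left sum_distrib_right algebra_simps)

lemma sum_mv: "(\<Sum>i\<in>I. f i) *v x = (\<Sum>i\<in>I. f i *v x)"
  by (induct I rule: infinite_finite_induct) (auto simp: matrix_vector_mult_add_rdistrib)

lemma scaleR_mv: "(c *\<^sub>R (M::real^'n^'m)) *v x = c *\<^sub>R (M *v x)"
  apply (subst vec_eq_iff, rule allI)
  apply (simp add: matrix_vector_mult_def scaleR_sum_right)
  by (simp add: sum_distrib_left vector_space_over_itself.scale_scale)

lemma YYt_mv: "YYt p Y *v x = (\<Sum>j<p. (Y j \<bullet> x) *\<^sub>R Y j)"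
  by (simp add: YYt_outer sum_mv outer_mv)

lemma frob_inner: "frob U V = U \<bullet> V"
  apply (simp add: frob_def trace_def transpose_def matrix_matrix_mult_def inner_vec_def)
  apply (subst sum.swap) apply simp done

lemma trace_transpose: "trace (transpose A) = trace A"
  by (simp add: trace_def transpose_def)

lemma frob_mult_right: "frob (A ** B) C = frob A (C ** transpose B)"
  unfolding frob_def matrix_transpose_mul
  by (metis matrix_mul_assoc trace_mul_sym)

lemma frob_mult_left: "frob (B ** A) C = frob A (transpose B ** C)"
  unfolding frob_def matrix_transpose_mul
  by (metis matrix_mul_assoc)

lemma transpose_add: "transpose (A + B) = transpose A + transpose B"
  by (simp add: transpose_def vec_eq_iff)

lemma transpose_diff: "transpose (A - B) = transpose A - transpose B"
  by (simp add: transpose_def vec_eq_iff)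

lemma matrix_add_rdistrib: "(A + B) ** C = A ** C + B ** (C::real^'n^'n)"
  by (simp add: matrix_matrix_mult_def vec_eq_iff sum.distrib algebra_simps)

lemma norm_mv_le: "norm (M *v x) \<le> norm M * norm (x::real^'n)" for M :: "real^'n^'m"
proof -
  have "norm (M *v x)^2 = (\<Sum>i\<in>UNIV. (M$i \<bullet> x)^2)"
    unfolding power2_norm_eq_inner inner_vec_def matrix_vector_mul_component
    by (simp add: power2_eq_square)
  also have "\<dots> \<le> (\<Sum>i\<in>UNIV. (norm (M$i))^2 * (norm x)^2)"
  proof (rule sum_mono)
    fix i
    have "\<bar>M$i \<bullet> x\<bar> \<le> norm (M$i) * norm x" by (rule Cauchy_Schwarz_ineq2)
    then have "\<bar>M$i \<bullet> x\<bar>^2 \<le> (norm (M$i) * norm x)^2"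
      by (intro power_mono) auto
    then show "(M$i \<bullet> x)^2 \<le> (norm (M$i))^2 * (norm x)^2"
      by (simp add: power_mult_distrib)
  qed
  also have "\<dots> = (\<Sum>i\<in>UNIV. (norm (M$i))^2) * (norm x)^2"
    by (simp add: sum_distrib_right)
  also have "(\<Sum>i\<in>UNIV. (norm (M$i))^2) = (norm M)^2"
    unfolding power2_norm_eq_inner inner_vec_def by simp
  also have "(norm M)^2 * (norm x)^2 = (norm M * norm x)^2"
    by (simp add: power_mult_distrib)
  finally show ?thesis
    by (meson mult_nonneg_nonneg norm_ge_zero power2_le_imp_le)
qed

lemma rank_nullity: "dim {x. M *v x = 0} + rank M = CARD('n)" for M :: "real^'n^'m"
proof -
  have eq: "{y \<in> UNIV. \<forall>x\<in>span (rows M). orthogonal x y} = {x. M *v x = 0}"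
  proof (intro set_eqI iffI)
    fix y assume "y \<in> {y \<in> UNIV. \<forall>x\<in>span (rows M). orthogonal x y}"
    then have "\<forall>i. orthogonal (row i M) y"
      by (auto simp: rows_def intro: span_base)
    then show "y \<in> {x. M *v x = 0}"
      by (simp add: vec_eq_iff matrix_vector_mul_component orthogonal_def row_def)
  next
    fix y assume "y \<in> {x. M *v x = 0}"
    then show "y \<in> {y \<in> UNIV. \<forall>x\<in>span (rows M). orthogonal x y}"
      using orthogonal_nullspace_rowspace[of M y] orthogonal_commute by blast
  qed
  have "dim {y \<in> UNIV. \<forall>x\<in>span (rows M). orthogonal x y} + dim (span (rows M)) = dim (UNIV::(real^'n) set)"
    by (rule dim_subspace_orthogonal_to_vectors) auto
  then show ?thesis
    unfolding eq by (simp add: row_rank_def dim_span)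
qed

lemma subspace_ker: "subspace {x. (A::real^'n^'m) *v x = 0}"
  by (auto simp: subspace_def matrix_vector_right_distrib matrix_vector_mult_scaleR)

lemma sym_dot: assumes "transpose G = G" shows "x \<bullet> (G *v y) = (G *v x) \<bullet> (y::real^'n)"
  by (metis assms dot_lmul_matrix transpose_matrix_vector)

lemma bl_mv: "bounded_linear (\<lambda>A::real^'n^'m. A *v v)"
proof -
  have "linear (\<lambda>A::real^'n^'m. A *v v)"
    by (auto simp: linear_iff matrix_vector_mult_add_rdistrib scaleR_mv)
  then show ?thesis by (simp add: linear_conv_bounded_linear)
qed

lemma diff_quot:
  assumes "(\<gamma> has_vector_derivative T) (at 0)"
  shows "((\<lambda>t. (1/t) *\<^sub>R (\<gamma> t - \<gamma> 0)) \<longlongrightarrow> T) (at (0::real))"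
proof -
  have "((\<lambda>h. norm (\<gamma> (0 + h) - \<gamma> 0 - h *\<^sub>R T) / norm h) \<longlongrightarrow> 0) (at 0)"
    using assms unfolding has_vector_derivative_def has_derivative_at by blast
  then have lim: "((\<lambda>h. norm (\<gamma> h - \<gamma> 0 - h *\<^sub>R T) / norm h) \<longlongrightarrow> 0) (at 0)" by simp
  have "((\<lambda>t. (1/t) *\<^sub>R (\<gamma> t - \<gamma> 0) - T) \<longlongrightarrow> 0) (at (0::real))"
  proof (rule Lim_null_comparison[OF _ lim])
    show "\<forall>\<^sub>F x in at 0. norm ((1/x) *\<^sub>R (\<gamma> x - \<gamma> 0) - T) \<le> norm (\<gamma> x - \<gamma> 0 - x *\<^sub>R T) / norm x"
    proof (rule eventually_at_filter[THEN iffD2], rule always_eventually, intro allI impI)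
      fix x :: real assume "x \<noteq> 0"
      then have "(1/x) *\<^sub>R (\<gamma> x - \<gamma> 0) - T = (1/x) *\<^sub>R (\<gamma> x - \<gamma> 0 - x *\<^sub>R T)"
        by (simp add: algebra_simps)
      then show "norm ((1/x) *\<^sub>R (\<gamma> x - \<gamma> 0) - T) \<le> norm (\<gamma> x - \<gamma> 0 - x *\<^sub>R T) / norm x"
        by (simp add: divide_inverse mult.commute)
    qed
  qed
  then show ?thesis by (simp add: LIM_zero_iff)
qed


lemma kernel_approx:
  fixes X G Pi :: "real^'n^'n"
  assumes c: "c > 0" and lb: "\<And>v. c * norm v \<le> norm ((X + Pi) *v v)"
    and small: "norm (G - X) < c/2"
    and rk: "rank G = rank X"
    and Pi_ker: "\<And>v. X *v (Pi *v v) = 0"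
    and w1: "X *v w1 = 0"
  shows "\<exists>x. G *v x = 0 \<and> (c/2) * norm (x - w1) \<le> norm (G - X) * norm w1"
proof -
  let ?Mt = "G + Pi"
  have lbt: "(c/2) * norm v \<le> norm (?Mt *v v)" for v
  proof -
    have "?Mt *v v = (X + Pi) *v v + (G - X) *v v"
      by (simp add: matrix_vector_mult_add_rdistrib matrix_vector_mult_diff_rdistrib)
    then have "norm (?Mt *v v) \<ge> norm ((X + Pi) *v v) - norm ((G - X) *v v)"
      by (metis norm_diff_ineq add_diff_cancel_right')
    moreover have "norm ((G - X) *v v) \<le> norm (G - X) * norm v" by (rule norm_mv_le)
    moreover have "norm (G - X) * norm v \<le> (c/2) * norm v"
      using small by (intro mult_right_mono) auto
    ultimately show ?thesis using lb[of v] by linarith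
  qed
  have inj: "inj ((*v) ?Mt)"
  proof (rule injI)
    fix u v assume "?Mt *v u = ?Mt *v v"
    then have "?Mt *v (u - v) = 0" by (simp add: matrix_vector_mult_diff_distrib)
    then have "(c/2) * norm (u - v) \<le> 0" using lbt[of "u - v"] by simp
    then show "u = v" using c by (simp add: mult_le_0_iff)
  qed
  then have "surj ((*v) ?Mt)"
    using full_rank_injective full_rank_surjective by metis
  then obtain x where x: "?Mt *v x = Pi *v w1" by (metis surjD)
  define V where "V = {v. (X ** ?Mt) *v v = 0}"
  define K where "K = {v. G *v v = 0}"
  define N where "N = {v. X *v v = 0}"
  have subV: "subspace V" unfolding V_def by (rule subspace_ker)
  have subK: "subspace K" unfolding K_def by (rule subspace_ker)
  have KV: "K \<subseteq> V"
  proof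
    fix v assume "v \<in> K"
    then have "?Mt *v v = Pi *v v" by (simp add: K_def matrix_vector_mult_add_rdistrib)
    then show "v \<in> V" by (simp add: V_def Pi_ker matrix_vector_mul_assoc[symmetric])
  qed
  have "dim V = dim ((*v) ?Mt ` V)"
    by (rule dim_image_eq[symmetric]) (auto intro: inj_on_subset[OF inj])
  also have "\<dots> \<le> dim N"
    by (rule dim_subset) (auto simp: V_def N_def matrix_vector_mul_assoc)
  also have "dim N = dim K"
    using rank_nullity[of X] rank_nullity[of G] rk by (simp add: N_def K_def)
  finally have "K = V" using subspace_dim_equal[OF subK subV KV] by simp
  moreover have "x \<in> V" by (simp add: V_def matrix_vector_mul_assoc[symmetric] x Pi_ker)
  ultimately have Gx: "G *v x = 0" unfolding K_def by blast
  have "?Mt *v (x - w1) = ?Mt *v x - ?Mt *v w1" by (simp only: matrix_vector_mult_diff_distrib)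
  also have "\<dots> = Pi *v w1 - (G *v w1 + Pi *v w1)" using x by (simp only: matrix_vector_mult_add_rdistrib)
  also have "\<dots> = - ((G - X) *v w1)" by (simp add: matrix_vector_mult_diff_rdistrib w1)
  finally have "?Mt *v (x - w1) = - ((G - X) *v w1)" .
  then have "(c/2) * norm (x - w1) \<le> norm ((G - X) *v w1)"
    using lbt[of "x - w1"] by simp
  also have "\<dots> \<le> norm (G - X) * norm w1" by (rule norm_mv_le)
  finally show ?thesis using Gx by blast
qed


lemma core:
  fixes X T Pi :: "real^'n^'n" and \<gamma> :: "real \<Rightarrow> real^'n^'n"
  assumes X0: "\<gamma> 0 = X" and e: "e > 0"
    and sr: "\<forall>t. \<bar>t\<bar> < e \<longrightarrow> \<gamma> t \<in> sym_rank (rank X)"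
    and der: "(\<gamma> has_vector_derivative T) (at 0)"
    and Pi_ker: "\<And>v. X *v (Pi *v v) = 0"
    and inj: "inj ((*v) (X + Pi))"
    and w1: "X *v w1 = 0" and w2: "X *v w2 = 0"
  shows "w1 \<bullet> (T *v w2) = 0"
proof -
  have lin: "linear ((*v) (X + Pi))" using matrix_vector_mul_linear[of "X + Pi"] by (simp add: eta_contract_eq)
  obtain c where c: "c > 0" and lb: "\<And>v. c * norm v \<le> norm ((X + Pi) *v v)"
    using linear_inj_bounded_below_pos[OF lin inj] by blast
  have "(\<gamma> \<longlongrightarrow> X) (at 0)"
    using has_vector_derivative_continuous[OF der] X0 by (simp add: continuous_at)
  then have ev1: "\<forall>\<^sub>F t in at 0. dist (\<gamma> t) X < c/2" using c tendsto_iff half_gt_zero by blast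
  have ev2: "\<forall>\<^sub>F t in at (0::real). \<bar>t\<bar> < e \<and> t \<noteq> 0"
    unfolding eventually_at using e by (auto intro!: exI[of _ e])
  define q where "q t = (1/t) *\<^sub>R (\<gamma> t - X)" for t
  have q: "(q \<longlongrightarrow> T) (at 0)" using diff_quot[OF der] X0 unfolding q_def[abs_def] by simp
  define K where "K = (2/c) * norm w1 * norm w2"
  have bound: "\<forall>\<^sub>F t in at 0. norm (w1 \<bullet> (q t *v w2)) \<le> K * (norm (\<gamma> t - X) * norm (q t))"
  proof (rule eventually_mono[OF eventually_conj[OF ev1 ev2]])
    fix t assume H: "dist (\<gamma> t) X < c/2 \<and> \<bar>t\<bar> < e \<and> t \<noteq> 0"
    define G where "G = \<gamma> t"
    have symG: "transpose G = G" and rkG: "rank G = rank X"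
      using sr H by (auto simp: G_def sym_rank_def sym_mat_def)
    have small: "norm (G - X) < c/2" using H by (simp add: G_def dist_norm)
    obtain x where Gx: "G *v x = 0" and xb: "(c/2) * norm (x - w1) \<le> norm (G - X) * norm w1"
      using kernel_approx[OF c lb small rkG Pi_ker w1] by blast
    have "x \<bullet> (G *v w2) = 0" using sym_dot[OF symG] Gx by simp
    then have eq: "w1 \<bullet> (G *v w2) = (w1 - x) \<bullet> ((G - X) *v w2)"
      by (simp add: matrix_vector_mult_diff_rdistrib w2 inner_diff_left)
    have "\<bar>w1 \<bullet> (G *v w2)\<bar> \<le> norm (w1 - x) * norm ((G - X) *v w2)"
      unfolding eq by (rule Cauchy_Schwarz_ineq2)
    also have "\<dots> \<le> norm (w1 - x) * (norm (G - X) * norm w2)"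
      by (intro mult_left_mono norm_mv_le) auto
    also have "norm (w1 - x) \<le> (2/c) * (norm (G - X) * norm w1)"
      using xb c by (simp add: norm_minus_commute field_simps)
    then have "norm (w1 - x) * (norm (G - X) * norm w2) \<le> (2/c) * (norm (G - X) * norm w1) * (norm (G - X) * norm w2)"
      by (intro mult_right_mono) auto
    finally have A: "\<bar>w1 \<bullet> (G *v w2)\<bar> \<le> K * (norm (G - X) * norm (G - X))"
      by (simp add: K_def algebra_simps)
    have "w1 \<bullet> (q t *v w2) = (1/t) * (w1 \<bullet> (G *v w2))"
      by (simp add: q_def scaleR_mv matrix_vector_mult_diff_rdistrib w2 G_def)
    then have B: "norm (w1 \<bullet> (q t *v w2)) = \<bar>w1 \<bullet> (G *v w2)\<bar> / \<bar>t\<bar>"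
      by (simp add: abs_mult divide_inverse mult.commute)
    have C: "norm (q t) = norm (G - X) / \<bar>t\<bar>"
      by (simp add: q_def G_def divide_inverse mult.commute)
    have "K \<ge> 0" using c by (simp add: K_def)
    have "\<bar>w1 \<bullet> (G *v w2)\<bar> / \<bar>t\<bar> \<le> K * (norm (G - X) * norm (G - X)) / \<bar>t\<bar>"
      using A H by (simp add: divide_right_mono)
    then show "norm (w1 \<bullet> (q t *v w2)) \<le> K * (norm (\<gamma> t - X) * norm (q t))"
      unfolding B C by (simp add: G_def)
  qed
  have g0: "((\<lambda>t. \<gamma> t - X) \<longlongrightarrow> 0) (at 0)"
    using \<open>(\<gamma> \<longlongrightarrow> X) (at 0)\<close> by (simp add: LIM_zero)
  have "((\<lambda>t. K * (norm (\<gamma> t - X) * norm (q t))) \<longlongrightarrow> K * (norm (0::real^'n^'n) * norm T)) (at 0)"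
    by (intro tendsto_intros g0 q)
  then have lim0: "((\<lambda>t. w1 \<bullet> (q t *v w2)) \<longlongrightarrow> 0) (at 0)"
    using Lim_null_comparison[OF bound] by simp
  have "((\<lambda>t. w1 \<bullet> (q t *v w2)) \<longlongrightarrow> w1 \<bullet> (T *v w2)) (at 0)"
    by (intro tendsto_intros bounded_linear.tendsto[OF bl_mv q])
  then show ?thesis using lim0 tendsto_unique[OF at_neq_bot] by blast
qed


lemma YYt_sym: "transpose (YYt p Y) = YYt p Y"
  by (simp add: YYt_def transpose_def vec_eq_iff sum_component mult.commute)

lemma YYt_quad: "v \<bullet> (YYt p Y *v v) = (\<Sum>j<p. (Y j \<bullet> v)^2)"
  by (simp add: YYt_mv inner_sum_right power2_eq_square inner_commute)

lemma YYt_psd: "psd (YYt p Y)"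
  unfolding psd_def sym_mat_def YYt_quad by (simp add: YYt_sym sum_nonneg)

lemma YYt_ker: "YYt p Y *v v = 0 \<longleftrightarrow> (\<forall>j<p. Y j \<bullet> v = 0)"
proof
  assume "YYt p Y *v v = 0"
  then have "(\<Sum>j<p. (Y j \<bullet> v)^2) = 0" using YYt_quad[of v p Y] by simp
  then show "\<forall>j<p. Y j \<bullet> v = 0" by (simp add: sum_nonneg_eq_0_iff)
qed (simp add: YYt_mv)

lemma span_kill:
  assumes "\<And>y. y \<in> B \<Longrightarrow> (S::real^'n^'m) *v y = 0" and "s \<in> span B"
  shows "S *v s = 0"
  using assms(2)
  by (induct rule: span_induct_alt) (auto simp: assms(1) matrix_vector_right_distrib matrix_vector_mult_scaleR)

lemma trace_part:
  fixes Y :: "nat \<Rightarrow> real^'n" and S T X :: "real^'n^'n"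
  assumes X: "X = YYt p Y" and symS: "transpose S = S" and SY: "\<forall>j<p. S *v Y j = 0"
    and tan: "T \<in> tangent_space X"
  shows "frob S T = 0"
proof -
  define B where "B = Y ` {..<p}"
  have Nchar: "X *v v = 0 \<longleftrightarrow> (\<forall>b\<in>B. b \<bullet> v = 0)" for v
    by (auto simp: X B_def YYt_ker)
  have Northo: "X *v v = 0 \<Longrightarrow> s \<in> span B \<Longrightarrow> v \<bullet> s = 0" for v s
    using orthogonal_to_span[of s B v] Nchar[of v] by (auto simp: orthogonal_def inner_commute)
  have "\<forall>c. \<exists>z. (\<forall>w\<in>span B. orthogonal z w) \<and> axis c 1 - z \<in> span B"
  proof
    fix c :: 'n
    obtain y z where "y \<in> span B" "\<And>w. w \<in> span B \<Longrightarrow> orthogonal z w" "axis c 1 = y + z"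
      using orthogonal_subspace_decomp_exists[of B "axis c (1::real)"] by metis
    then show "\<exists>z. (\<forall>w\<in>span B. orthogonal z w) \<and> axis c 1 - z \<in> span B"
      by (intro exI[of _ z]) auto
  qed
  then obtain zv where zv1: "\<And>c w. w \<in> span B \<Longrightarrow> orthogonal (zv c) w"
    and zv2: "\<And>c. axis c 1 - zv c \<in> span B"
    by metis
  define P :: "real^'n^'n" where "P = (\<chi> a c. zv c $ a)"
  have Pmv: "P *v u = (\<Sum>c\<in>UNIV. u$c *\<^sub>R zv c)" for u
    by (simp add: P_def vec_eq_iff matrix_vector_mult_def sum_component mult.commute)
  have Porth: "(P *v u) \<bullet> w = 0" if "w \<in> span B" for u w
    using zv1[OF that] by (simp add: Pmv inner_sum_left orthogonal_def)
  have PN: "X *v (P *v u) = 0" for u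
    using Porth Nchar by (simp add: span_base inner_commute)
  have Pspan: "u - P *v u \<in> span B" for u
  proof -
    have "u = (\<Sum>c\<in>UNIV. u$c *\<^sub>R axis c 1)"
      using basis_expansion[of u] by (simp add: scalar_mult_eq_scaleR)
    then have "u - P *v u = (\<Sum>c\<in>UNIV. u$c *\<^sub>R axis c 1) - (\<Sum>c\<in>UNIV. u$c *\<^sub>R zv c)"
      using Pmv by simp
    also have "\<dots> = (\<Sum>c\<in>UNIV. u$c *\<^sub>R (axis c 1 - zv c))"
      by (simp add: sum_subtractf[symmetric] scaleR_right_diff_distrib)
    also have "\<dots> \<in> span B" by (intro span_sum span_mul zv2)
    finally show ?thesis .
  qed
  have Pinner: "(P *v u) \<bullet> v = (P *v u) \<bullet> (P *v v)" for u v
  proof -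
    have "(P *v u) \<bullet> (v - P *v v) = 0" by (rule Porth[OF Pspan])
    then show ?thesis by (simp add: inner_diff_right)
  qed
  have Psym: "transpose P = P"
  proof -
    have "transpose P *v u = P *v u" for u
    proof -
      have "(transpose P *v u - P *v u) \<bullet> v = 0" for v
      proof -
        have "(transpose P *v u) \<bullet> v = u \<bullet> (P *v v)"
          by (metis dot_lmul_matrix inner_commute transpose_matrix_vector transpose_transpose)
        also have "\<dots> = (P *v v) \<bullet> (P *v u)" using Pinner[of v u] by (simp add: inner_commute)
        also have "\<dots> = (P *v u) \<bullet> v" using Pinner[of u v] by (simp add: inner_commute)
        finally show ?thesis by (simp add: inner_diff_left)
      qed
      from this[of "transpose P *v u - P *v u"] show ?thesis by simp
    qed
    then show ?thesis by (simp add: matrix_eq)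
  qed
  have Pinj: "inj ((*v) (X + P))"
  proof -
    have "v = 0" if "(X + P) *v v = 0" for v
    proof -
      have e1: "X *v v = - (P *v v)" using that by (simp add: matrix_vector_mult_add_rdistrib eq_neg_iff_add_eq_0)
      have Xspan: "X *v v \<in> span B"
        unfolding X YYt_mv B_def by (intro span_sum span_mul span_base) auto
      have "(X *v v) \<bullet> (X *v v) = 0"
        using Porth[OF Xspan, of v] e1 by simp
      then have Xv: "X *v v = 0" by simp
      then have Pv: "P *v v = 0" using e1 by simp
      have "v \<in> span B" using Pspan[of v] Pv by simp
      then have "v \<bullet> v = 0" using Northo[OF Xv] by blast
      then show "v = 0" by simp
    qed
    then show ?thesis
      by (intro injI) (metis eq_iff_diff_eq_0 matrix_vector_mult_diff_distrib)
  qed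
  obtain \<gamma> e where g0: "\<gamma> 0 = X" and e: "e > 0"
    and sr: "\<forall>t. \<bar>t\<bar> < e \<longrightarrow> \<gamma> t \<in> sym_rank (rank X)"
    and der: "(\<gamma> has_vector_derivative T) (at 0)"
    using tan unfolding tangent_space_def by blast
  have PTP: "P ** T ** P = 0"
  proof -
    have "(P ** T ** P) *v u = 0" for u
    proof -
      let ?w = "(P ** T ** P) *v u"
      have "?w \<bullet> ?w = (P *v ?w) \<bullet> (T *v (P *v u))"
        by (metis Psym sym_dot matrix_vector_mul_assoc)
      also have "\<dots> = 0"
        by (rule core[OF g0 e sr der PN Pinj PN PN])
      finally show ?thesis by simp
    qed
    then show ?thesis by (simp add: matrix_eq)
  qed
  have SP: "S ** P = S"
  proof -
    have "S *v (u - P *v u) = 0" for u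
      by (rule span_kill[OF _ Pspan]) (auto simp: B_def SY)
    then show ?thesis
      by (simp add: matrix_eq matrix_vector_mul_assoc[symmetric] matrix_vector_mult_diff_distrib)
  qed
  have PS: "P ** S = S"
    by (metis SP Psym symS matrix_transpose_mul)
  have "frob S T = frob (S ** P) T" by (simp add: SP)
  also have "\<dots> = frob S (T ** P)" by (simp add: frob_mult_right Psym)
  also have "\<dots> = frob (P ** S) (T ** P)" by (simp add: PS)
  also have "\<dots> = frob S (P ** T ** P)" by (simp add: frob_mult_left Psym matrix_mul_assoc)
  also have "\<dots> = 0" by (simp add: PTP frob_inner)
  finally show ?thesis .
qed


lemma transpose_sum_scale:
  assumes "\<forall>i\<in>I. transpose (A i) = A i"
  shows "transpose (\<Sum>i\<in>I. c i *\<^sub>R A i) = (\<Sum>i\<in>I. c i *\<^sub>R (A i :: real^'n^'n))"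
  using assms
proof (induct I rule: infinite_finite_induct)
  case (insert x F)
  then show ?case by (simp add: transpose_add transpose_scalar)
qed (auto simp: transpose_def vec_eq_iff)

lemma dir2:
  fixes A :: "nat \<Rightarrow> real^'n^'n"
  assumes symA: "\<forall>i<m. sym_mat (A i)" and li: "lin_indep_mats A m"
    and nd: "\<forall>X \<in> feasible_set A m b. primal_nondegenerate A m b X"
  shows "assumption1a A m b p"
  unfolding assumption1a_def
proof (rule ballI, rule allI, rule impI)
  fix Y c
  assume Y: "Y \<in> Mp A m b p" and H: "\<forall>j<p. (\<Sum>i<m. c i *\<^sub>R (A i *v Y j)) = 0"
  define X where "X = YYt p Y"
  have "X \<in> feasible_set A m b"
    using Y YYt_psd by (auto simp: X_def feasible_set_def Mp_def)
  then have ndX: "primal_nondegenerate A m b X" using nd by blast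
  define S where "S = (\<Sum>i<m. c i *\<^sub>R A i)"
  have symS: "transpose S = S"
    using symA unfolding S_def sym_mat_def by (intro transpose_sum_scale) auto
  have SY: "\<forall>j<p. S *v Y j = 0"
    using H by (simp add: S_def sum_mv scaleR_mv)
  obtain T K where T: "T \<in> tangent_space X" and K: "\<forall>i<m. frob (A i) K = 0" and SK: "S = T + K"
    using ndX symS unfolding primal_nondegenerate_def sym_mat_def by blast
  have fT: "frob S T = 0" by (rule trace_part[OF X_def symS SY T])
  have fK: "frob S K = 0"
    using K by (simp add: S_def frob_inner inner_sum_left)
  have "S \<bullet> S = 0"
  proof -
    have "S \<bullet> S = frob S T + frob S K" by (simp add: frob_inner SK[symmetric] inner_add_right[symmetric])
    then show ?thesis using fT fK by simp
  qed
  then have "S = 0" by simp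
  then show "\<forall>i<m. c i = 0" using li unfolding lin_indep_mats_def S_def by blast
qed

lemma quad_aux:
  fixes a q :: real
  assumes q0: "q \<ge> 0" and H: "\<And>s. 0 \<le> 2 * s * a + s^2 * q"
  shows "a = 0"
proof -
  define d where "d = q + 1"
  have d: "d > 0" using q0 by (simp add: d_def)
  have "0 \<le> (2*(-a/d)*a + (-a/d)^2*q) * d^2" using H[of "-a/d"] by simp
  also have "(2*(-a/d)*a + (-a/d)^2*q) * d^2 = -2*a^2*d + a^2*q"
    using d by (simp add: field_simps power2_eq_square)
  also have "\<dots> = -(a^2)*(q+2)" by (simp add: d_def algebra_simps)
  finally have "a^2 * (q + 2) \<le> 0" by simp
  moreover have "q + 2 > 0" using q0 by simp
  ultimately have "a^2 \<le> 0" by (simp add: mult_le_0_iff)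
  then show ?thesis by simp
qed
lemma psd_zero:
  assumes "psd X" and "v \<bullet> (X *v v) = 0"
  shows "X *v v = 0"
proof -
  have symX: "transpose X = X" using assms(1) by (simp add: psd_def sym_mat_def)
  have key: "(X *v v) \<bullet> w = 0" for w
  proof -
    define a where "a = w \<bullet> (X *v v)"
    define q where "q = w \<bullet> (X *v w)"
    have q0: "q \<ge> 0" using assms(1) by (simp add: psd_def q_def)
    have quad: "0 \<le> 2 * s * a + s^2 * q" for s
    proof -
      have "0 \<le> (v + s *\<^sub>R w) \<bullet> (X *v (v + s *\<^sub>R w))" using assms(1) by (simp add: psd_def)
      also have "\<dots> = v \<bullet> (X *v v) + s * (v \<bullet> (X *v w)) + s * (w \<bullet> (X *v v)) + s^2 * (w \<bullet> (X *v w))"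
        by (simp add: matrix_vector_right_distrib matrix_vector_mult_scaleR inner_add_left inner_add_right power2_eq_square algebra_simps)
      also have "v \<bullet> (X *v w) = w \<bullet> (X *v v)"
        using sym_dot[OF symX, of v w] by (simp add: inner_commute)
      finally show ?thesis using assms(2) by (simp add: a_def q_def algebra_simps)
    qed
    have "a = 0" by (rule quad_aux[OF q0 quad])
    then show ?thesis by (simp add: a_def inner_commute)
  qed
  show ?thesis using key[of "X *v v"] by simp
qed


lemma outer_transpose: "transpose (outer y y) = outer y y"
  by (simp add: outer_def transpose_def vec_eq_iff mult.commute)

lemma ker_dim_less:
  fixes X X' :: "real^'n^'n"
  assumes "\<And>v. X *v v = 0 \<Longrightarrow> X' *v v = 0" and "X' *v u = 0" and "X *v u \<noteq> 0"
  shows "rank X' < rank X"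
proof -
  have "{v. X *v v = 0} \<subset> {v. X' *v v = 0}" using assms by auto
  then have "span {v. X *v v = 0} \<subset> span {v. X' *v v = 0}"
    using subspace_ker[of X] subspace_ker[of X'] by (metis span_eq_iff)
  then have "dim {v. X *v v = 0} < dim {v. X' *v v = 0}" by (rule dim_psubset)
  then show ?thesis using rank_nullity[of X] rank_nullity[of X'] by linarith
qed

lemma psd_factor: "psd X \<Longrightarrow> \<exists>k Y. X = YYt k Y"
proof (induction "rank X" arbitrary: X rule: less_induct)
  case less
  show ?case
  proof (cases "X = 0")
    case True
    then show ?thesis by (intro exI[of _ 0]) (simp add: YYt_def)
  next
    case False
    have symX: "transpose X = X" using less.prems by (simp add: psd_def sym_mat_def)
    obtain u where Xu: "X *v u \<noteq> 0" using False by (metis matrix_eq matrix_vector_mult_0)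
    define \<alpha> where "\<alpha> = u \<bullet> (X *v u)"
    have "\<alpha> \<ge> 0" using less.prems by (simp add: psd_def \<alpha>_def)
    moreover have "\<alpha> \<noteq> 0" using psd_zero[OF less.prems] Xu by (auto simp: \<alpha>_def)
    ultimately have apos: "\<alpha> > 0" by simp
    define y where "y = (1 / sqrt \<alpha>) *\<^sub>R (X *v u)"
    define X' where "X' = X - outer y y"
    have yv: "(y \<bullet> v)^2 = (u \<bullet> (X *v v))^2 / \<alpha>" for v
    proof -
      have "y \<bullet> v = (u \<bullet> (X *v v)) / sqrt \<alpha>"
        using sym_dot[OF symX, of u v] by (simp add: y_def inner_commute)
      then show ?thesis using apos by (simp add: power_divide)
    qed
    have X'mv: "X' *v v = X *v v - (y \<bullet> v) *\<^sub>R y" for v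
      by (simp add: X'_def matrix_vector_mult_diff_rdistrib outer_mv)
    have psdX': "psd X'"
      unfolding psd_def sym_mat_def
    proof
      show "transpose X' = X'" by (simp add: X'_def transpose_diff symX outer_transpose)
      show "\<forall>v. 0 \<le> v \<bullet> (X' *v v)"
      proof
        fix v
        define s where "s = - (u \<bullet> (X *v v)) / \<alpha>"
        have "0 \<le> (v + s *\<^sub>R u) \<bullet> (X *v (v + s *\<^sub>R u))" using less.prems by (simp add: psd_def)
        also have "\<dots> = v \<bullet> (X *v v) + 2 * s * (u \<bullet> (X *v v)) + s^2 * \<alpha>"
        proof -
          have "v \<bullet> (X *v u) = u \<bullet> (X *v v)"
            using sym_dot[OF symX, of v u] by (simp add: inner_commute)
          then show ?thesis
            by (simp add: matrix_vector_right_distrib matrix_vector_mult_scaleR inner_add_left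
                inner_add_right power2_eq_square algebra_simps \<alpha>_def)
        qed
        also have "\<dots> = v \<bullet> (X *v v) - (u \<bullet> (X *v v))^2 / \<alpha>"
          using apos by (simp add: s_def field_simps power2_eq_square)
        also have "\<dots> = v \<bullet> (X' *v v)"
        proof -
          have "v \<bullet> (X' *v v) = v \<bullet> (X *v v) - (y \<bullet> v)^2"
            by (simp add: X'mv inner_diff_right inner_commute power2_eq_square)
          then show ?thesis by (simp add: yv)
        qed
        finally show "0 \<le> v \<bullet> (X' *v v)" .
      qed
    qed
    have "rank X' < rank X"
    proof (rule ker_dim_less)
      fix v assume v: "X *v v = 0"
      have "y \<bullet> v = 0"
        using sym_dot[OF symX, of u v] v by (simp add: y_def inner_commute)
      then show "X' *v v = 0" by (simp add: X'mv v)
    next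
      show "X *v u \<noteq> 0" by (rule Xu)
    next
      have yu: "y \<bullet> u = \<alpha> / sqrt \<alpha>"
        by (simp add: y_def \<alpha>_def inner_commute divide_inverse mult.commute)
      have "\<alpha> / sqrt \<alpha> * (1 / sqrt \<alpha>) = 1"
        using apos by (simp add: field_simps)
      then have "(y \<bullet> u) *\<^sub>R y = (\<alpha> / sqrt \<alpha> * (1 / sqrt \<alpha>)) *\<^sub>R (X *v u)"
        unfolding yu by (simp only: y_def scaleR_scaleR)
      then have "(y \<bullet> u) *\<^sub>R y = X *v u"
        using \<open>\<alpha> / sqrt \<alpha> * (1 / sqrt \<alpha>) = 1\<close> by simp
      then show "X' *v u = 0" by (simp add: X'mv)
    qed
    then obtain k Y' where Y': "X' = YYt k Y'" using less.hyps psdX' by blast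
    define Y'' where "Y'' = Y'(k := y)"
    have "YYt (Suc k) Y'' = YYt k Y' + outer y y"
      unfolding YYt_outer by (simp add: Y''_def)
    also have "\<dots> = X" by (simp add: Y'[symmetric] X'_def)
    finally show ?thesis by metis
  qed
qed


lemma span_image_repr:
  fixes v :: "nat \<Rightarrow> 'a::real_vector"
  assumes "x \<in> span (v ` K)" and fin: "finite K"
  shows "\<exists>d. x = (\<Sum>k\<in>K. d k *\<^sub>R v k)"
proof (rule span_induct_alt[OF assms(1)])
  show "\<exists>d. 0 = (\<Sum>k\<in>K. d k *\<^sub>R v k)" by (intro exI[of _ "\<lambda>_. 0"]) simp
next
  fix c x y assume x: "x \<in> v ` K" and "\<exists>d. y = (\<Sum>k\<in>K. d k *\<^sub>R v k)"
  then obtain d where d: "y = (\<Sum>k\<in>K. d k *\<^sub>R v k)" by auto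
  from x obtain k0 where k0: "k0 \<in> K" "x = v k0" by auto
  have "c *\<^sub>R x + y = (\<Sum>k\<in>K. (if k = k0 then c else 0) *\<^sub>R v k) + (\<Sum>k\<in>K. d k *\<^sub>R v k)"
    using k0 fin d by (simp add: if_distrib[of "\<lambda>a. a *\<^sub>R v _"] sum.delta' cong: if_cong)
  also have "\<dots> = (\<Sum>k\<in>K. ((if k = k0 then c else 0) + d k) *\<^sub>R v k)"
    by (simp add: sum.distrib[symmetric] scaleR_add_left)
  finally show "\<exists>d. c *\<^sub>R x + y = (\<Sum>k\<in>K. d k *\<^sub>R v k)"
    by (rule exI[of _ "\<lambda>k. (if k = k0 then c else 0) + d k"])
qed

lemma dual_basis:
  fixes v :: "nat \<Rightarrow> 'a::euclidean_space"
  assumes li: "\<forall>c. (\<Sum>i<m. c i *\<^sub>R v i) = 0 \<longrightarrow> (\<forall>i<m. c i = 0)"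
  shows "\<exists>w. \<forall>i<m. v i \<bullet> w = \<beta> i"
proof -
  have "\<forall>i. \<exists>u. i < m \<longrightarrow> (v i \<bullet> u = 1 \<and> (\<forall>k<m. k \<noteq> i \<longrightarrow> v k \<bullet> u = 0))"
  proof
    fix i
    show "\<exists>u. i < m \<longrightarrow> (v i \<bullet> u = 1 \<and> (\<forall>k<m. k \<noteq> i \<longrightarrow> v k \<bullet> u = 0))"
    proof (cases "i < m")
      case False then show ?thesis by simp
    next
      case True
      define U where "U = v ` ({..<m} - {i})"
      obtain a z where a: "a \<in> span U" and z: "\<And>w. w \<in> span U \<Longrightarrow> orthogonal z w"
        and vi: "v i = a + z"
        using orthogonal_subspace_decomp_exists[of U "v i"] by metis
      have "z \<noteq> 0"
      proof
        assume "z = 0"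
        then have "v i \<in> span U" using a vi by simp
        then obtain d where d: "v i = (\<Sum>k\<in>{..<m} - {i}. d k *\<^sub>R v k)"
          using span_image_repr[of "v i" v "{..<m} - {i}"] unfolding U_def by auto
        define c where "c = d(i := -1)"
        have "(\<Sum>k<m. c k *\<^sub>R v k) = c i *\<^sub>R v i + (\<Sum>k\<in>{..<m} - {i}. c k *\<^sub>R v k)"
          using True by (simp add: sum.remove[of "{..<m}" i])
        also have "(\<Sum>k\<in>{..<m} - {i}. c k *\<^sub>R v k) = (\<Sum>k\<in>{..<m} - {i}. d k *\<^sub>R v k)"
          by (rule sum.cong) (auto simp: c_def)
        finally have "(\<Sum>k<m. c k *\<^sub>R v k) = 0" using d by (simp add: c_def)
        then have "c i = 0" using li True by blast
        then show False by (simp add: c_def)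
      qed
      define u where "u = (1 / (z \<bullet> z)) *\<^sub>R z"
      have az: "a \<bullet> z = 0" using z[OF a] by (simp add: orthogonal_def inner_commute)
      have "v i \<bullet> u = 1" using \<open>z \<noteq> 0\<close> by (simp add: u_def vi inner_add_left az)
      moreover have "v k \<bullet> u = 0" if "k < m" "k \<noteq> i" for k
      proof -
        have "v k \<in> span U" using that by (auto simp: U_def intro: span_base)
        then have "z \<bullet> v k = 0" using z by (simp add: orthogonal_def)
        then show ?thesis by (simp add: u_def inner_commute)
      qed
      ultimately show ?thesis using True by blast
    qed
  qed
  then obtain u where u1: "\<And>i. i < m \<Longrightarrow> v i \<bullet> u i = 1"
    and u0: "\<And>i k. i < m \<Longrightarrow> k < m \<Longrightarrow> k \<noteq> i \<Longrightarrow> v k \<bullet> u i = 0"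
    by metis
  define w where "w = (\<Sum>i<m. \<beta> i *\<^sub>R u i)"
  have "v k \<bullet> w = \<beta> k" if "k < m" for k
  proof -
    have "v k \<bullet> w = (\<Sum>i<m. \<beta> i * (v k \<bullet> u i))" by (simp add: w_def inner_sum_right)
    also have "\<dots> = (\<Sum>i<m. if i = k then \<beta> k else 0)"
      apply (rule sum.cong, simp)
      subgoal for i using that u1[of k] u0[of i k] by auto
      done
    also have "\<dots> = \<beta> k" using that by simp
    finally show ?thesis .
  qed
  then show ?thesis by blast
qed


lemma rank_inv_left:
  fixes P A :: "real^'n^'n"
  assumes "invertible P" shows "rank (P ** A) = rank A"
proof -
  obtain P' where "P' ** P = mat 1" using assms invertible_def by blast
  then have "A = P' ** (P ** A)" by (simp add: matrix_mul_assoc)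
  then have "rank A \<le> rank (P ** A)" by (metis rank_mul_le_right)
  then show ?thesis using rank_mul_le_right[of P A] by simp
qed

lemma rank_inv_right:
  fixes Q A :: "real^'n^'n"
  assumes "invertible Q" shows "rank (A ** Q) = rank A"
proof -
  obtain Q' where "Q ** Q' = mat 1" using assms invertible_def by blast
  then have "A = (A ** Q) ** Q'" by (simp add: matrix_mul_assoc[symmetric])
  then have "rank A \<le> rank (A ** Q)" by (metis rank_mul_le_left)
  then show ?thesis using rank_mul_le_left[of A Q] by simp
qed

lemma near_id_invertible:
  fixes W :: "real^'n^'n"
  assumes "\<bar>t\<bar> * norm W < 1"
  shows "invertible (mat 1 + t *\<^sub>R W)"
proof -
  have "v = 0" if "(mat 1 + t *\<^sub>R W) *v v = 0" for v
  proof -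
    have "v = - (t *\<^sub>R (W *v v))"
      using that by (simp add: matrix_vector_mult_add_rdistrib scaleR_mv eq_neg_iff_add_eq_0)
    then have "norm v = \<bar>t\<bar> * norm (W *v v)" by (metis norm_minus_cancel norm_scaleR)
    also have "\<dots> \<le> \<bar>t\<bar> * (norm W * norm v)" by (intro mult_left_mono norm_mv_le) auto
    finally have "norm v * (1 - \<bar>t\<bar> * norm W) \<le> 0" by (simp add: algebra_simps)
    then have "norm v \<le> 0" using assms by (simp add: mult_le_0_iff)
    then show "v = 0" by simp
  qed
  then have "inj ((*v) (mat 1 + t *\<^sub>R W))"
    by (intro injI) (metis eq_iff_diff_eq_0 matrix_vector_mult_diff_distrib)
  then show ?thesis
    using invertible_left_inverse matrix_left_invertible_injective by blast
qed

lemma tangent_WX: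
  fixes X W :: "real^'n^'n"
  assumes symX: "transpose X = X"
  shows "W ** X + X ** transpose W \<in> tangent_space X"
proof -
  define D where "D = W ** X + X ** transpose W"
  define Q where "Q = W ** X ** transpose W"
  define \<gamma> where "\<gamma> t = (mat 1 + t *\<^sub>R W) ** X ** transpose (mat 1 + t *\<^sub>R W)" for t
  have gexp: "\<gamma> t = X + t *\<^sub>R D + (t^2) *\<^sub>R Q" for t
    by (simp add: \<gamma>_def D_def Q_def transpose_add transpose_scalar matrix_add_ldistrib matrix_add_rdistrib
        scalar_matrix_assoc[symmetric] matrix_scalar_ac matrix_mul_assoc power2_eq_square algebra_simps)
  define e where "e = 1 / (norm W + 1)"
  have e: "e > 0" by (simp add: e_def add_nonneg_pos)
  have sr: "\<forall>t. \<bar>t\<bar> < e \<longrightarrow> \<gamma> t \<in> sym_rank (rank X)"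
  proof (intro allI impI)
    fix t :: real assume t: "\<bar>t\<bar> < e"
    have "\<bar>t\<bar> * norm W \<le> e * norm W" using t by (intro mult_right_mono) auto
    also have "e * norm W < 1"
    proof -
      have "norm W + 1 > 0" using norm_ge_zero[of W] by linarith
      then show ?thesis by (simp add: e_def field_simps)
    qed
    finally have inv: "invertible (mat 1 + t *\<^sub>R W)" by (rule near_id_invertible)
    have "rank (\<gamma> t) = rank X"
      unfolding \<gamma>_def using inv transpose_invertible[OF inv]
      by (simp add: rank_inv_left rank_inv_right)
    moreover have "transpose (\<gamma> t) = \<gamma> t"
      by (simp add: \<gamma>_def matrix_transpose_mul symX matrix_mul_assoc)
    ultimately show "\<gamma> t \<in> sym_rank (rank X)" by (simp add: sym_rank_def sym_mat_def)
  qed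
  have "((\<lambda>t. X + t *\<^sub>R D + (t^2) *\<^sub>R Q) has_vector_derivative D) (at 0)"
    by (auto intro!: derivative_eq_intros)
  then have der: "(\<gamma> has_vector_derivative D) (at 0)"
    using gexp by (simp add: fun_eq_iff[symmetric] gexp[abs_def])
  have g0: "\<gamma> 0 = X" by (simp add: gexp)
  show ?thesis unfolding tangent_space_def D_def[symmetric]
    using g0 e sr der by blast
qed


lemma frob_comm: "frob U V = frob V U"
  by (simp add: frob_inner inner_commute)

lemma frob_transpose: "frob (transpose U) (transpose V) = frob U V"
  unfolding frob_def
  by (metis matrix_transpose_mul trace_mul_sym trace_transpose transpose_transpose)

lemma frob_tangent_dir:
  fixes A X W :: "real^'n^'n"
  assumes symA: "transpose A = A" and symX: "transpose X = X"
  shows "frob A (W ** X + X ** transpose W) = 2 * ((A ** X) \<bullet> W)"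
proof -
  have 1: "frob A (W ** X) = frob (A ** X) W"
    by (metis frob_comm frob_mult_right symX)
  have "frob A (X ** transpose W) = frob (transpose W) (X ** A)"
    by (metis frob_comm frob_mult_left symX)
  also have "\<dots> = frob W (transpose (X ** A))"
    by (metis frob_transpose transpose_transpose)
  also have "\<dots> = frob (A ** X) W"
    by (simp add: matrix_transpose_mul symA symX frob_comm)
  finally have 2: "frob A (X ** transpose W) = frob (A ** X) W" .
  show ?thesis
    by (simp add: frob_inner inner_add_right 1[unfolded frob_inner] 2[unfolded frob_inner])
qed

lemma sum_mult_right: "(\<Sum>i\<in>I. f i) ** (X::real^'n^'n) = (\<Sum>i\<in>I. f i ** X)"
  by (induct I rule: infinite_finite_induct) (auto simp: matrix_add_rdistrib)

lemma dir1:
  fixes A :: "nat \<Rightarrow> real^'n^'n"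
  assumes symA: "\<forall>i<m. sym_mat (A i)"
    and H: "\<forall>p\<ge>1. Mp A m b p \<noteq> {} \<longrightarrow> assumption1a A m b p"
    and X: "X \<in> feasible_set A m b"
  shows "primal_nondegenerate A m b X"
proof -
  have psdX: "psd X" and AX: "\<forall>i<m. frob (A i) X = b i" using X by (auto simp: feasible_set_def)
  have symX: "transpose X = X" using psdX by (simp add: psd_def sym_mat_def)
  obtain k Y where XY: "X = YYt k Y" using psd_factor[OF psdX] by blast
  define p where "p = Suc k"
  define Y' where "Y' j = (if j < k then Y j else 0)" for j
  have XY': "X = YYt p Y'"
    unfolding XY YYt_outer p_def by (simp add: Y'_def outer_def vec_eq_iff)
  have "\<forall>j\<ge>p. Y' j = 0" by (simp add: Y'_def p_def)
  then have "Y' \<in> Mp A m b p" using AX unfolding Mp_def by (simp add: XY'[symmetric])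
  then have a1: "assumption1a A m b p" using H by (auto simp: p_def)
  then have a1': "\<And>c. (\<forall>j<p. (\<Sum>i<m. c i *\<^sub>R (A i *v Y' j)) = 0) \<Longrightarrow> (\<forall>i<m. c i = 0)"
    using \<open>Y' \<in> Mp A m b p\<close> unfolding assumption1a_def by blast
  have li: "\<forall>c. (\<Sum>i<m. c i *\<^sub>R (A i ** X)) = 0 \<longrightarrow> (\<forall>i<m. c i = 0)"
  proof (rule allI, rule impI)
    fix c assume c: "(\<Sum>i<m. c i *\<^sub>R (A i ** X)) = 0"
    define S where "S = (\<Sum>i<m. c i *\<^sub>R A i)"
    have symS: "transpose S = S"
      using symA unfolding S_def sym_mat_def by (intro transpose_sum_scale) auto
    have SX: "S ** X = 0" using c by (simp add: S_def sum_mult_right scalar_matrix_assoc)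
    have "S *v Y' j = 0" if "j < p" for j
    proof -
      define w where "w = S *v Y' j"
      have "(\<Sum>l<p. ((S *v Y' l) \<bullet> w)^2) = w \<bullet> ((S ** X) *v (S *v w))"
      proof -
        have "(S ** X) *v (S *v w) = (\<Sum>l<p. (Y' l \<bullet> (S *v w)) *\<^sub>R (S *v Y' l))"
          by (simp add: matrix_vector_mul_assoc[symmetric] XY' YYt_mv matrix_vector_mult_scaleR
              linear_sum[OF matrix_vector_mul_linear] )
        also have "\<dots> = (\<Sum>l<p. ((S *v Y' l) \<bullet> w) *\<^sub>R (S *v Y' l))"
          using sym_dot[OF symS] by (simp add: inner_commute)
        finally show ?thesis
          by (simp add: inner_sum_right power2_eq_square inner_commute)
      qed
      also have "\<dots> = 0" by (simp add: SX)
      finally have "(\<Sum>l<p. ((S *v Y' l) \<bullet> w)^2) = 0" .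
      then have "(S *v Y' j) \<bullet> w = 0" using that by (simp add: sum_nonneg_eq_0_iff)
      then show ?thesis by (simp add: w_def)
    qed
    then show "\<forall>i<m. c i = 0"
      using a1'[of c] by (simp add: S_def sum_mv scaleR_mv)
  qed
  show ?thesis
    unfolding primal_nondegenerate_def
  proof (intro conjI allI impI)
    show "X \<in> feasible_set A m b" by (rule X)
    fix Z :: "real^'n^'n" assume Z: "sym_mat Z"
    obtain W where W: "\<forall>i<m. (A i ** X) \<bullet> W = frob (A i) Z / 2"
      using dual_basis[OF li, of "\<lambda>i. frob (A i) Z / 2"] by blast
    define T where "T = W ** X + X ** transpose W"
    define K where "K = Z - T"
    have T: "T \<in> tangent_space X" unfolding T_def by (rule tangent_WX[OF symX])
    have symT: "transpose T = T"
      by (simp add: T_def transpose_add matrix_transpose_mul symX add.commute)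
    have "sym_mat K" using Z symT by (simp add: K_def sym_mat_def transpose_diff)
    moreover have "\<forall>i<m. frob (A i) K = 0"
    proof (intro allI impI)
      fix i assume i: "i < m"
      have "frob (A i) T = frob (A i) Z"
        using frob_tangent_dir[of "A i" X W] symA i symX W by (simp add: T_def sym_mat_def)
      then show "frob (A i) K = 0" by (simp add: K_def frob_inner inner_diff_right)
    qed
    moreover have "Z = T + K" by (simp add: K_def)
    ultimately show "\<exists>T K. T \<in> tangent_space X \<and> sym_mat K \<and> (\<forall>i<m. frob (A i) K = 0) \<and> Z = T + K"
      using T by blast
  qed
qed

theorem proposition9:
  fixes A :: "nat \<Rightarrow> real^'n^'n" and m :: nat and b :: "nat \<Rightarrow> real"
  assumes "\<forall>i<m. sym_mat (A i)"
    and "lin_indep_mats A m"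
  shows "(\<forall>p\<ge>1. Mp A m b p \<noteq> {} \<longrightarrow> assumption1a A m b p) \<longleftrightarrow>
         (\<forall>X \<in> feasible_set A m b. primal_nondegenerate A m b X)"
  using dir1[OF assms(1)] dir2[OF assms] by blast

end
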